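(* For all positive integers $\rho$ and $v$ (for which $\beta(\rho,v,4)$ is defined), \[ \beta(\rho,v,4) \le \rho\left( (8\rho - 7) + \max\left\{ 12, \left\lfloor \frac{v-4\rho}{3} \right\rfloor \right\} \right). \]
   Context: For integers $v \ge k \ge 2$, a $(v,k)$-packing is a pair $(X,\mathcal{B})$ where $X$ is a set of $v$ points and $\mathcal{B}$ is a set of $k$-subsets of $X$ (blocks) such that every pair of distinct points lies in at most one block. A partial parallel class (PPC) is a set of pairwise disjoint blocks; its size is the number of blocks. A PPC of size $\rho$ is maximum if the packing has no PPC of size $\rho+1$. $\beta(\rho,v,k)$ denotes the maximum number of blocks in a $(v,k)$-packing in which the maximum PPC has size $\rho$. *)

theory Defs
  imports Complex_Main
begin

definition is_packing :: "'a set \<Rightarrow> nat \<Rightarrow> 'a set set \<Rightarrow> bool" where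
  "is_packing X k B \<longleftrightarrow>
     (\<forall>b\<in>B. b \<subseteq> X \<and> card b = k) \<and>
     (\<forall>x\<in>X. \<forall>y\<in>X. x \<noteq> y \<longrightarrow> card {b\<in>B. x \<in> b \<and> y \<in> b} \<le> 1)"

definition is_PPC :: "'a set set \<Rightarrow> 'a set set \<Rightarrow> bool" where
  "is_PPC B P \<longleftrightarrow> P \<subseteq> B \<and> (\<forall>p\<in>P. \<forall>q\<in>P. p \<noteq> q \<longrightarrow> p \<inter> q = {})"

definition max_PPC_size :: "'a set set \<Rightarrow> nat \<Rightarrow> bool" where
  "max_PPC_size B \<rho> \<longleftrightarrow>
     (\<exists>P. is_PPC B P \<and> card P = \<rho>) \<and> \<not> (\<exists>P. is_PPC B P \<and> card P = \<rho> + 1)"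

text \<open>Packings on the point set {0..<v} (every v-set is isomorphic to it).\<close>
definition beta_set :: "nat \<Rightarrow> nat \<Rightarrow> nat \<Rightarrow> nat set" where
  "beta_set \<rho> v k = {card B | B. is_packing {0..<v} k B \<and> max_PPC_size B \<rho>}"

definition beta :: "nat \<Rightarrow> nat \<Rightarrow> nat \<Rightarrow> nat" where
  "beta \<rho> v k = Max (beta_set \<rho> v k)"

end

theory Submission
  imports Defs
begin

lemma pack_inter:
  assumes "is_packing X k B" "finite B" "b1 \<in> B" "b2 \<in> B" "x \<in> b1" "y \<in> b1" "x \<in> b2" "y \<in> b2" "x \<noteq> y"
  shows "b1 = b2"
proof (rule ccontr)
  assume ne: "b1 \<noteq> b2"
  have "x \<in> X" "y \<in> X" using assms unfolding is_packing_def by auto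
  then have "card {b\<in>B. x \<in> b \<and> y \<in> b} \<le> 1" using assms unfolding is_packing_def by blast
  moreover have "{b1,b2} \<subseteq> {b\<in>B. x \<in> b \<and> y \<in> b}" using assms by auto
  moreover have "finite {b\<in>B. x \<in> b \<and> y \<in> b}" using assms by auto
  ultimately have "card {b1,b2} \<le> 1" by (meson card_mono order_trans)
  with ne show False by simp
qed

lemma F_bound_star:
  fixes F :: "'a set set" and p W :: "'a set"
  assumes fin: "finite W" and sub: "\<And>b. b \<in> F \<Longrightarrow> b - p \<subseteq> W \<and> card (b - p) = 3"
    and disj: "\<And>b b'. b \<in> F \<Longrightarrow> b' \<in> F \<Longrightarrow> b \<noteq> b' \<Longrightarrow> (b - p) \<inter> (b' - p) = {}"
    and finF: "finite F"
  shows "card F \<le> card W div 3"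
proof -
  have "card (\<Union>b\<in>F. b - p) = (\<Sum>b\<in>F. card (b - p))"
    apply (rule card_UN_disjoint) using finF apply simp
    using sub apply (metis card.infinite zero_neq_numeral)
    using disj by blast
  also have "\<dots> = 3 * card F" using sub by simp
  finally have "3 * card F \<le> card W" using sub
    by (metis (no_types, lifting) UN_subset_iff card_mono fin)
  then show ?thesis by linarith
qed

lemma F_bound_nonstar:
  fixes F :: "'a set set" and p :: "'a set"
  assumes finp: "finite p" "card p = 4" and finF: "finite F"
    and one: "\<And>b. b \<in> F \<Longrightarrow> \<exists>x. b \<inter> p = {x}"
    and c3: "\<And>b. b \<in> F \<Longrightarrow> finite b \<and> card (b - p) = 3"
    and meet: "\<And>b b'. b \<in> F \<Longrightarrow> b' \<in> F \<Longrightarrow> b \<noteq> b' \<Longrightarrow> \<exists>y. b \<inter> b' = {y}"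
    and b12: "b1 \<in> F" "b2 \<in> F" "b1 \<inter> p \<noteq> b2 \<inter> p"
  shows "card F \<le> 12"
proof -
  have Fz: "card {b\<in>F. z \<in> b} \<le> 3" if zp: "z \<in> p" for z
  proof -
    obtain x1 where x1: "b1 \<inter> p = {x1}" using one b12(1) by blast
    obtain x2 where x2: "b2 \<inter> p = {x2}" using one b12(2) by blast
    have "x1 \<noteq> x2" using x1 x2 b12(3) by auto
    have "\<exists>c. c \<in> F \<and> z \<notin> c"
    proof (cases "z = x1")
      case True
      then have "z \<notin> b2" using x2 zp \<open>x1 \<noteq> x2\<close> by blast
      then show ?thesis using b12(2) by blast
    next
      case False
      then have "z \<notin> b1" using x1 zp by blast
      then show ?thesis using b12(1) by blast
    qed
    then obtain c where c: "c \<in> F" "z \<notin> c" by blast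
    define f where "f b = (SOME y. y \<in> b \<inter> c)" for b
    have fb: "f b \<in> b \<inter> c - p" if hb: "b \<in> F" "z \<in> b" for b
    proof -
      have "b \<noteq> c" using hb c by auto
      then obtain y where y: "b \<inter> c = {y}" using meet[OF hb(1) c(1)] by blast
      then have "f b = y" unfolding f_def by auto
      moreover have "y \<notin> p"
      proof
        assume yp: "y \<in> p"
        obtain x where x: "b \<inter> p = {x}" using one[OF hb(1)] by blast
        have "y \<in> b \<inter> p" "z \<in> b \<inter> p" using y yp hb(2) zp by auto
        then have "y = z" using x by auto
        then show False using y c(2) by auto
      qed
      ultimately show ?thesis using y by auto
    qed
    have "inj_on f {b\<in>F. z \<in> b}"
    proof (rule inj_onI)
      fix b b' assume h: "b \<in> {b\<in>F. z \<in> b}" "b' \<in> {b\<in>F. z \<in> b}" "f b = f b'"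
      show "b = b'"
      proof (rule ccontr)
        assume "b \<noteq> b'"
        then obtain y where "b \<inter> b' = {y}" using meet h by blast
        moreover have "f b \<in> b \<inter> b'" "f b \<notin> p"
        proof -
          have "f b \<in> b \<inter> c - p" "f b' \<in> b' \<inter> c - p" using fb h(1,2) by auto
          then show "f b \<in> b \<inter> b'" "f b \<notin> p" using h(3) by auto
        qed
        moreover have "z \<in> b \<inter> b'" using h by auto
        ultimately have "f b = z" by auto
        then show False using \<open>f b \<notin> p\<close> zp by simp
      qed
    qed
    moreover have "f ` {b\<in>F. z \<in> b} \<subseteq> c - p" using fb by auto
    moreover have "finite (c - p)" using c c3 by auto
    ultimately have "card {b\<in>F. z \<in> b} \<le> card (c - p)" by (rule card_inj_on_le)
    then show ?thesis using c3 c by simp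
  qed
  have "F \<subseteq> (\<Union>z\<in>p. {b\<in>F. z \<in> b})"
  proof
    fix b assume "b \<in> F"
    then obtain x where "b \<inter> p = {x}" using one by blast
    then have "x \<in> p" "x \<in> b" by auto
    then show "b \<in> (\<Union>z\<in>p. {b\<in>F. z \<in> b})" using \<open>b \<in> F\<close> by blast
  qed
  then have "F = (\<Union>z\<in>p. {b\<in>F. z \<in> b})" by blast
  then have "card F \<le> (\<Sum>z\<in>p. card {b\<in>F. z \<in> b})"
    by (metis card_UN_le finp(1))
  also have "\<dots> \<le> (\<Sum>z\<in>p. 3)" by (rule sum_mono) (use Fz in auto)
  finally show ?thesis using finp by simp
qed

lemma cross_count:
  fixes P :: "nat set set"
  assumes finP: "finite P" and c4: "\<And>p. p \<in> P \<Longrightarrow> finite p \<and> card p = 4"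
    and dj: "\<And>p q. p \<in> P \<Longrightarrow> q \<in> P \<Longrightarrow> p \<noteq> q \<Longrightarrow> p \<inter> q = {}"
  shows "card {(x,y). x \<in> \<Union>P \<and> y \<in> \<Union>P \<and> x < y \<and> \<not>(\<exists>p\<in>P. x \<in> p \<and> y \<in> p)} = 8 * card P * (card P - 1)"
proof -
  define n where "n = card P"
  define U where "U = \<Union>P"
  have finU: "finite U" unfolding U_def using finP c4 by auto
  have "card U = sum card P" unfolding U_def
    by (rule card_Union_disjoint) (use dj c4 in \<open>auto simp: pairwise_def disjnt_def\<close>)
  also have "\<dots> = 4 * n" using c4 n_def by simp
  finally have cU: "card U = 4 * n" .
  define S where "S = (\<Union>p\<in>P. p \<times> p)"
  have "card S = (\<Sum>p\<in>P. card (p \<times> p))" unfolding S_def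
    by (rule card_UN_disjoint) (use finP c4 dj in auto)
  also have "\<dots> = 16 * n" using c4 n_def by (simp add: card_cartesian_product)
  finally have cS: "card S = 16 * n" .
  define D2 where "D2 = U \<times> U - S"
  have SU: "S \<subseteq> U \<times> U" unfolding S_def U_def by auto
  have finS: "finite S" using SU finU finite_subset by blast
  have cD2: "card D2 = 16 * n * n - 16 * n" unfolding D2_def
    using card_Diff_subset[OF finS SU] cU cS by (simp add: card_cartesian_product)
  define D where "D = {(x,y). x \<in> \<Union>P \<and> y \<in> \<Union>P \<and> x < y \<and> \<not>(\<exists>p\<in>P. x \<in> p \<and> y \<in> p)}"
  define D' where "D' = {(x,y). x \<in> \<Union>P \<and> y \<in> \<Union>P \<and> y < x \<and> \<not>(\<exists>p\<in>P. x \<in> p \<and> y \<in> p)}"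
  have D2eq: "D2 = D \<union> D'"
  proof
    show "D2 \<subseteq> D \<union> D'"
    proof
      fix e assume "e \<in> D2"
      then obtain x y where e: "e = (x,y)" "x \<in> U" "y \<in> U" "\<not>(\<exists>p\<in>P. x \<in> p \<and> y \<in> p)"
        unfolding D2_def S_def by auto
      then have "x \<noteq> y" unfolding U_def by auto
      have xyU: "x \<in> \<Union>P" "y \<in> \<Union>P" using e(2,3) unfolding U_def by auto
      show "e \<in> D \<union> D'"
      proof (cases "x < y")
        case True
        then have "e \<in> D" unfolding D_def e(1) using xyU e(4) by simp
        then show ?thesis by simp
      next
        case False
        then have "y < x" using \<open>x \<noteq> y\<close> by simp
        then have "e \<in> D'" unfolding D'_def e(1) using xyU e(4) by simp
        then show ?thesis by simp
      qed
    qed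
    show "D \<union> D' \<subseteq> D2" unfolding D_def D'_def D2_def S_def U_def by auto
  qed
  have "D' \<subseteq> prod.swap ` D"
  proof
    fix e assume eD: "e \<in> D'"
    obtain x y where e: "e = (x,y)" by (cases e)
    have "(y,x) \<in> D" using eD unfolding e D_def D'_def by auto
    then show "e \<in> prod.swap ` D" unfolding e by (rule rev_image_eqI) simp
  qed
  moreover have "prod.swap ` D \<subseteq> D'"
  proof
    fix e assume "e \<in> prod.swap ` D"
    then obtain x y where e: "e = (y,x)" and xy: "(x,y) \<in> D" by auto
    then show "e \<in> D'" unfolding e D_def D'_def by auto
  qed
  ultimately have "D' = prod.swap ` D" by (rule equalityI)
  then have cD': "card D' = card D" by (simp add: card_image)
  have finD2: "finite D2" unfolding D2_def using finU by simp
  have h1: "\<forall>e\<in>D. fst e < snd e" unfolding D_def by auto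
  have h2: "\<forall>e\<in>D'. snd e < fst e" unfolding D'_def by auto
  have dd: "D \<inter> D' = {}"
  proof (intro equalityI subsetI)
    fix e assume "e \<in> D \<inter> D'"
    then have "fst e < snd e" "snd e < fst e" using h1 h2 by auto
    then show "e \<in> {}" by simp
  qed simp
  have finD: "finite D" "finite D'" using finD2 D2eq by (simp_all add: finite_subset)
  have "card D2 = card D + card D'"
    unfolding D2eq by (rule card_Un_disjoint[OF finD dd])
  then have "2 * card D = 16 * n * n - 16 * n" using cD' cD2 by simp
  moreover have "16 * n * n - 16 * n = 2 * (8 * n * (n - 1))" by (cases n) (auto simp: algebra_simps)
  ultimately have "card D = 8 * n * (n - 1)" by simp
  then show ?thesis unfolding D_def n_def .
qed

lemma main_bound:
  fixes B P :: "nat set set" and X :: "nat set"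
  assumes pk: "is_packing X 4 B" and fX: "finite X" and PP: "is_PPC B P" and cP: "card P = \<rho>"
    and rpos: "\<rho> > 0"
    and nomax: "\<not>(\<exists>Q. is_PPC B Q \<and> card Q = \<rho> + 1)"
  shows "card B \<le> \<rho> * (8 * \<rho> - 7 + max 12 ((card X - 4 * \<rho>) div 3)) \<and> 4 * \<rho> \<le> card X"
proof -
  have blk: "\<And>b. b \<in> B \<Longrightarrow> b \<subseteq> X \<and> card b = 4" using pk unfolding is_packing_def by auto
  have finB: "finite B" using blk fX by (meson PowI finite_Pow_iff finite_subset subsetI)
  have PB: "P \<subseteq> B" and dj: "\<And>p q. p \<in> P \<Longrightarrow> q \<in> P \<Longrightarrow> p \<noteq> q \<Longrightarrow> p \<inter> q = {}"
    using PP unfolding is_PPC_def by auto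
  have finP: "finite P" using PB finB finite_subset by blast
  have finb: "\<And>b. b \<in> B \<Longrightarrow> finite b" using blk fX finite_subset by blast
  have c4: "\<And>p. p \<in> P \<Longrightarrow> finite p \<and> card p = 4" using PB blk finb by blast
  have inter1: "\<And>b1 b2 x y. b1 \<in> B \<Longrightarrow> b2 \<in> B \<Longrightarrow> x \<in> b1 \<Longrightarrow> y \<in> b1 \<Longrightarrow> x \<in> b2 \<Longrightarrow> y \<in> b2 \<Longrightarrow> x \<noteq> y \<Longrightarrow> b1 = b2"
    using pack_inter[OF pk finB] by blast
  define U where "U = \<Union>P"
  have finU: "finite U" unfolding U_def using finP c4 by auto
  have "card U = sum card P" unfolding U_def
    by (rule card_Union_disjoint) (use dj c4 in \<open>auto simp: pairwise_def disjnt_def\<close>)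
  also have "\<dots> = 4 * \<rho>" using c4 cP by simp
  finally have cU: "card U = 4 * \<rho>" .
  have UX: "U \<subseteq> X" unfolding U_def using PB blk by blast
  have cUX: "4 * \<rho> \<le> card X" using card_mono[OF fX UX] cU by simp
  define W where "W = X - U"
  have cW: "card W = card X - 4 * \<rho>" unfolding W_def using card_Diff_subset[OF finU UX] cU by simp
  have finW: "finite W" unfolding W_def using fX by simp
  have meetU: "b \<inter> U \<noteq> {}" if "b \<in> B" "b \<notin> P" for b
  proof
    assume h: "b \<inter> U = {}"
    have "is_PPC B (insert b P)" using PP that h unfolding is_PPC_def U_def by blast
    moreover have "card (insert b P) = \<rho> + 1" using finP that cP by simp
    ultimately show False using nomax by blast
  qed
  define F where "F p = {b \<in> B - P. b \<inter> U \<subseteq> p}" for p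
  define N where "N = {b \<in> B - P. \<not>(\<exists>p\<in>P. b \<inter> U \<subseteq> p)}"
  have Bsub: "B \<subseteq> P \<union> N \<union> (\<Union>p\<in>P. F p)" unfolding N_def F_def by blast
  define D where "D = {(x,y). x \<in> \<Union>P \<and> y \<in> \<Union>P \<and> x < y \<and> \<not>(\<exists>p\<in>P. x \<in> p \<and> y \<in> p)}"
  have cD: "card D = 8 * \<rho> * (\<rho> - 1)" unfolding D_def using cross_count[OF finP c4 dj] cP by simp
  have Nex: "\<exists>e. e \<in> D \<and> fst e \<in> b \<and> snd e \<in> b" if bN: "b \<in> N" for b
  proof -
    have bB: "b \<in> B" "b \<notin> P" using that unfolding N_def by auto
    obtain x where x: "x \<in> b" "x \<in> U" using meetU[OF bB] by blast
    then obtain p0 where p0: "p0 \<in> P" "x \<in> p0" unfolding U_def by blast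
    obtain y where y: "y \<in> b" "y \<in> U" "y \<notin> p0" using bN x p0 unfolding N_def by blast
    have xy: "x \<noteq> y" using p0 y by auto
    have ns: "\<not>(\<exists>p\<in>P. x \<in> p \<and> y \<in> p)"
    proof
      assume "\<exists>p\<in>P. x \<in> p \<and> y \<in> p"
      then obtain q where "q \<in> P" "x \<in> q" "y \<in> q" by blast
      then have "q = p0" using dj p0 by blast
      then show False using y \<open>y \<in> q\<close> by simp
    qed
    show ?thesis
    proof (cases "x < y")
      case True
      then show ?thesis using x y ns by (intro exI[of _ "(x,y)"]) (auto simp: D_def U_def)
    next
      case False
      then have "y < x" using xy by simp
      then show ?thesis using x y ns by (intro exI[of _ "(y,x)"]) (auto simp: D_def U_def)
    qed
  qed
  define g where "g b = (SOME e. e \<in> D \<and> fst e \<in> b \<and> snd e \<in> b)" for b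
  have gN: "g b \<in> D \<and> fst (g b) \<in> b \<and> snd (g b) \<in> b" if "b \<in> N" for b
    unfolding g_def by (rule someI_ex) (rule Nex[OF that])
  have "inj_on g N"
  proof (rule inj_onI)
    fix b b' assume h: "b \<in> N" "b' \<in> N" "g b = g b'"
    obtain x y where xy: "g b = (x,y)" by (cases "g b")
    have xyD: "(x,y) \<in> D" "x \<in> b" "y \<in> b" using gN[OF h(1)] xy by auto
    have "x \<in> b'" "y \<in> b'" using gN[OF h(2)] xy h(3) by auto
    moreover have "x < y" using xyD(1) unfolding D_def by simp
    moreover have "b \<in> B" "b' \<in> B" using h(1,2) unfolding N_def by auto
    ultimately show "b = b'" using inter1[of b b' x y] xyD by simp
  qed
  moreover have "g ` N \<subseteq> D" using gN by auto
  moreover have "finite D" unfolding D_def using finU U_def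
    by (auto intro: finite_subset[of _ "\<Union>P \<times> \<Union>P"])
  ultimately have "card N \<le> card D" by (rule card_inj_on_le)
  then have cN: "card N \<le> 8 * \<rho> * (\<rho> - 1)" using cD by simp
  define M where "M = max 12 ((card X - 4 * \<rho>) div 3)"
  have cF: "card (F p) \<le> M" if pP: "p \<in> P" for p
  proof -
    have finF: "finite (F p)" unfolding F_def using finB by simp
    have pU: "p \<subseteq> U" unfolding U_def using pP by auto
    have props: "b \<in> B \<and> b \<notin> P \<and> b \<inter> U \<subseteq> p \<and> finite b \<and> card b = 4 \<and> b \<noteq> p" if "b \<in> F p" for b
      using that pP blk finb unfolding F_def by auto
    have one: "\<exists>x. b \<inter> p = {x}" if "b \<in> F p" for b
    proof -
      have "b \<inter> p \<noteq> {}" using meetU[of b] props[OF that] pU by blast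
      then obtain x where "x \<in> b \<inter> p" by blast
      moreover have "y = x" if "y \<in> b \<inter> p" for y
        using inter1[of b p x y] props[OF \<open>b \<in> F p\<close>] that \<open>x \<in> b \<inter> p\<close> PB pP by blast
      ultimately show ?thesis by blast
    qed
    have c3: "finite b \<and> card (b - p) = 3" if hb: "b \<in> F p" for b
    proof -
      obtain x where "b \<inter> p = {x}" using one[OF hb] by blast
      then have "card (b - p) = card b - 1" using props[OF hb] card_Diff_subset_Int[of b p] by simp
      then show ?thesis using props[OF hb] by simp
    qed
    have sW: "b - p \<subseteq> W" if "b \<in> F p" for b
      using props[OF that] blk unfolding W_def by blast
    have meet: "\<exists>y. b \<inter> b' = {y}" if "b \<in> F p" "b' \<in> F p" "b \<noteq> b'" for b b'
    proof -
      have nd: "b \<inter> b' \<noteq> {}"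
      proof
        assume bd: "b \<inter> b' = {}"
        define Q where "Q = insert b (insert b' (P - {p}))"
        have "is_PPC B Q"
          unfolding is_PPC_def Q_def
        proof (intro conjI ballI impI)
          show "insert b (insert b' (P - {p})) \<subseteq> B" using props that PB by blast
        next
          fix q r assume qr: "q \<in> insert b (insert b' (P - {p}))" "r \<in> insert b (insert b' (P - {p}))" "q \<noteq> r"
          have a1: "b \<inter> s = {}" if "s \<in> P - {p}" for s
          proof -
            have "b \<inter> s \<subseteq> p \<inter> s" using props[OF \<open>b \<in> F p\<close>] that U_def by blast
            then show ?thesis using dj[of p s] pP that by blast
          qed
          have a2: "b' \<inter> s = {}" if "s \<in> P - {p}" for s
          proof -
            have "b' \<inter> s \<subseteq> p \<inter> s" using props[OF \<open>b' \<in> F p\<close>] that U_def by blast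
            then show ?thesis using dj[of p s] pP that by blast
          qed
          have "q = b \<or> q = b' \<or> q \<in> P - {p}" "r = b \<or> r = b' \<or> r \<in> P - {p}" using qr(1,2) by auto
          then show "q \<inter> r = {}"
            using qr(3) a1 a2 bd dj[of q r] by (elim disjE) (auto simp: Int_commute)
        qed
        moreover have "card Q = \<rho> + 1"
        proof -
          have "card (P - {p}) = \<rho> - 1" using pP cP finP by simp
          moreover have "b \<notin> P - {p}" "b' \<notin> P - {p}" using props that by auto
          ultimately show ?thesis unfolding Q_def using finP that rpos by simp
        qed
        ultimately show False using nomax by blast
      qed
      then obtain y where "y \<in> b \<inter> b'" by blast
      moreover have "z = y" if "z \<in> b \<inter> b'" for z
        using inter1[of b b' y z] props \<open>b \<in> F p\<close> \<open>b' \<in> F p\<close> \<open>b \<noteq> b'\<close> that \<open>y \<in> b \<inter> b'\<close> by blast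
      ultimately show ?thesis by blast
    qed
    show ?thesis
    proof (cases "\<exists>b1\<in>F p. \<exists>b2\<in>F p. b1 \<inter> p \<noteq> b2 \<inter> p")
      case True
      then obtain b1 b2 where "b1 \<in> F p" "b2 \<in> F p" "b1 \<inter> p \<noteq> b2 \<inter> p" by blast
      then have "card (F p) \<le> 12" using F_bound_nonstar[of p "F p" b1 b2] c4[OF pP] finF one c3 meet by blast
      then show ?thesis unfolding M_def by simp
    next
      case False
      have disj: "(b - p) \<inter> (b' - p) = {}" if hb: "b \<in> F p" "b' \<in> F p" "b \<noteq> b'" for b b'
      proof -
        obtain x where x: "b \<inter> p = {x}" using one[OF hb(1)] by blast
        have x': "b' \<inter> p = {x}" using False hb x by blast
        obtain y where "b \<inter> b' = {y}" using meet[OF hb] by blast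
        moreover have "x \<in> b \<inter> b'" using x x' by blast
        ultimately have "y = x" by auto
        then show ?thesis using \<open>b \<inter> b' = {y}\<close> x by blast
      qed
      have "card (F p) \<le> card W div 3"
        by (rule F_bound_star[OF finW _ disj finF]) (use sW c3 in auto)
      then show ?thesis unfolding M_def cW by simp
    qed
  qed
  have "card B \<le> card (P \<union> N \<union> (\<Union>p\<in>P. F p))"
    by (rule card_mono[OF _ Bsub]) (use finP finB in \<open>auto simp: N_def F_def\<close>)
  also have "\<dots> \<le> card P + card N + card (\<Union>p\<in>P. F p)"
    by (meson add_le_mono1 card_Un_le le_trans)
  also have "card (\<Union>p\<in>P. F p) \<le> (\<Sum>p\<in>P. card (F p))" by (rule card_UN_le[OF finP])
  also have "\<dots> \<le> (\<Sum>p\<in>P. M)" by (rule sum_mono) (use cF in auto)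
  finally have "card B \<le> \<rho> + 8 * \<rho> * (\<rho> - 1) + \<rho> * M" using cP cN by simp
  also have "\<dots> = \<rho> * (8 * \<rho> - 7 + M)" using rpos by (cases \<rho>) (auto simp: algebra_simps)
  finally show ?thesis unfolding M_def using cUX by simp
qed

theorem theorem3p2:
  fixes \<rho> v :: nat
  assumes "\<rho> > 0" and "v > 0" and "beta_set \<rho> v 4 \<noteq> {}"
  shows "int (beta \<rho> v 4) \<le>
           int \<rho> * ((8 * int \<rho> - 7) + max 12 \<lfloor>(real v - 4 * real \<rho>) / 3\<rfloor>)"
proof -
  define K where "K = \<rho> * (8 * \<rho> - 7 + max 12 ((v - 4 * \<rho>) div 3))"
  have bnd: "card B \<le> K \<and> 4 * \<rho> \<le> v" if hB: "is_packing {0..<v} 4 B" "max_PPC_size B \<rho>" for B :: "nat set set"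
  proof -
    obtain P where P: "is_PPC B P" "card P = \<rho>" using hB(2) unfolding max_PPC_size_def by blast
    have nm: "\<not>(\<exists>Q. is_PPC B Q \<and> card Q = \<rho> + 1)" using hB(2) unfolding max_PPC_size_def by blast
    have "card B \<le> \<rho> * (8 * \<rho> - 7 + max 12 ((card {0..<v} - 4 * \<rho>) div 3)) \<and> 4 * \<rho> \<le> card {0..<v}"
      by (rule main_bound[OF hB(1) finite_atLeastLessThan P(1) P(2) assms(1) nm])
    then show ?thesis unfolding K_def by simp
  qed
  have "beta_set \<rho> v 4 \<subseteq> {..K}" unfolding beta_set_def using bnd by auto
  then have fin: "finite (beta_set \<rho> v 4)" using finite_subset by blast
  have "beta \<rho> v 4 \<in> beta_set \<rho> v 4" unfolding beta_def using Max_in[OF fin assms(3)] .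
  then obtain B where B: "beta \<rho> v 4 = card B" "is_packing {0..<v} 4 B" "max_PPC_size B \<rho>"
    unfolding beta_set_def by blast
  from bnd[OF B(2,3)] have h1: "beta \<rho> v 4 \<le> K" and h2: "4 * \<rho> \<le> v" using B(1) by auto
  have e1: "real v - 4 * real \<rho> = real (v - 4 * \<rho>)" using h2 by simp
  have e2: "(3::real) = real (3::nat)" by simp
  have fl0: "\<lfloor>real (v - 4 * \<rho>) / real (3::nat)\<rfloor> = int ((v - 4 * \<rho>) div 3)"
    by (rule floor_divide_of_nat_eq)
  have fl: "\<lfloor>(real v - 4 * real \<rho>) / 3\<rfloor> = int ((v - 4 * \<rho>) div 3)"
    unfolding e1 by (subst e2) (rule fl0)
  have "int K = int \<rho> * ((8 * int \<rho> - 7) + max 12 (int ((v - 4 * \<rho>) div 3)))"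
    unfolding K_def using assms(1) by (simp add: of_nat_diff)
  then show ?thesis using h1 fl by simp
qed

end
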